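(* Let $X$ be a nonempty compact Hausdorff space and $T\in M(X,X)$. Then there exists a nonempty subset $A\subset X$ with $T(A)=A$.
   Context: A continuous multivalued map $X\to Y$ is a subset $T\subset X\times Y$ such that the restriction of the projection $X\times Y\to X$ to $T$ is proper (universally closed; equivalently closed with compact fibers), surjective and has finite fibers; $M(X,Y)$ is the set of these. For $A\subset X$, $T(A)$ denotes the image of $T\cap(A\times X)$ under the projection to the second factor; a subset $A$ with $T(A)=A$ is called a fixed subset. *)

theory Defs
  imports "HOL-Analysis.Analysis"
begin

definition cmv_maps :: "'a topology \<Rightarrow> 'b topology \<Rightarrow> ('a \<times> 'b) set set" where
  "cmv_maps X Y = {T. T \<subseteq> topspace X \<times> topspace Y
      \<and> proper_map (subtopology (prod_topology X Y) T) X fst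
      \<and> fst ` T = topspace X
      \<and> (\<forall>x \<in> topspace X. finite {y. (x, y) \<in> T})}"

definition mv_image :: "('a \<times> 'b) set \<Rightarrow> 'a set \<Rightarrow> 'b set" where
  "mv_image T A = snd ` (T \<inter> (A \<times> UNIV))"

end

theory Submission
  imports Defs
begin

lemma T_compact:
  assumes "compact_space X" "T \<in> cmv_maps X X"
  shows "compactin (prod_topology X X) T"
proof -
  have sub: "T \<subseteq> topspace X \<times> topspace X" and pm: "proper_map (subtopology (prod_topology X X) T) X fst"
    and im: "fst ` T = topspace X" using assms(2) by (auto simp: cmv_maps_def)
  have tt: "topspace (subtopology (prod_topology X X) T) = T" using sub by auto
  have "compact_space (subtopology (prod_topology X X) T)"
    by (rule compact_space_proper_map_preimage[OF pm]) (use im tt assms(1) in auto)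
  then show ?thesis using sub by (simp add: compactin_subspace)
qed

lemma T_cpt_Int:
  assumes "compact_space X" "Hausdorff_space X" "T \<in> cmv_maps X X"
    and "closedin X C" "closedin X D"
  shows "compactin (prod_topology X X) (T \<inter> (C \<times> D))"
proof -
  have c: "compactin (prod_topology X X) T" using T_compact assms by blast
  have "Hausdorff_space (prod_topology X X)" using assms(2) Hausdorff_space_prod_topology by blast
  then have "closedin (prod_topology X X) T" using c compactin_imp_closedin by blast
  moreover have "closedin (prod_topology X X) (C \<times> D)" using assms by (simp add: closedin_prod_Times_iff)
  ultimately have "closedin (prod_topology X X) (T \<inter> (C \<times> D))" by blast
  then show ?thesis using c closed_compactin by blast
qed

theorem mainTheorem14:
  fixes X :: "'a topology" and T :: "('a \<times> 'a) set"
  assumes "topspace X \<noteq> {}"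
    and "compact_space X"
    and "Hausdorff_space X"
    and "T \<in> cmv_maps X X"
  shows "\<exists>A. A \<subseteq> topspace X \<and> A \<noteq> {} \<and> mv_image T A = A"
proof -
  have sub: "T \<subseteq> topspace X \<times> topspace X" and im: "fst ` T = topspace X"
    using assms(4) by (auto simp: cmv_maps_def)
  define S where "S n = ((\<lambda>A. mv_image T A) ^^ n) (topspace X)" for n
  have S0: "S 0 = topspace X" and SS: "S (Suc n) = mv_image T (S n)" for n by (auto simp: S_def)
  have Ssub: "S n \<subseteq> topspace X" for n
    by (cases n) (use sub in \<open>auto simp: S0 SS mv_image_def\<close>)
  have Sne: "S n \<noteq> {}" for n
  proof (induction n)
    case 0 then show ?case using assms(1) S0 by simp
  next
    case (Suc n)
    then obtain x where "x \<in> S n" by blast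
    then have "x \<in> fst ` T" using Ssub im by blast
    then obtain y where "(x,y) \<in> T" by force
    then show ?case using \<open>x \<in> S n\<close> by (auto simp: SS mv_image_def)
  qed
  have Scl: "closedin X (S n)" for n
  proof (induction n)
    case 0 then show ?case using S0 by simp
  next
    case (Suc m)
    have "compactin X (snd ` (T \<inter> (S m \<times> topspace X)))"
      by (rule image_compactin[OF T_cpt_Int[OF assms(2,3,4) Suc] continuous_map_snd]) simp
    moreover have "snd ` (T \<inter> (S m \<times> topspace X)) = S (Suc m)"
      using sub by (auto simp: SS mv_image_def)
    ultimately show ?case using compactin_imp_closedin assms(3) by metis
  qed
  have Sdec1: "S (Suc n) \<subseteq> S n" for n
  proof (induction n)
    case 0 then show ?case using Ssub S0 by simp
  next
    case (Suc n) then show ?case unfolding SS mv_image_def by blast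
  qed
  have Sdec: "decseq S" by (rule decseq_SucI) (use Sdec1 in auto)
  define A where "A = (\<Inter>n. S n)"
  have Ane: "A \<noteq> {}" unfolding A_def
    by (rule compact_space_imp_nest[OF assms(2) Scl Sne Sdec])
  have AS: "A \<subseteq> topspace X" using Ssub S0 A_def by auto
  have "mv_image T A \<subseteq> A"
  proof
    fix y assume "y \<in> mv_image T A"
    then obtain x where xy: "(x,y) \<in> T" "x \<in> A" by (auto simp: mv_image_def)
    have "y \<in> S n" for n
    proof (cases n)
      case 0 then show ?thesis using sub xy S0 by auto
    next
      case (Suc m) then show ?thesis using xy unfolding A_def Suc SS mv_image_def by (metis (no_types, lifting) IntI INT_E UNIV_I mem_Sigma_iff rangeI snd_conv image_eqI)
    qed
    then show "y \<in> A" by (auto simp: A_def)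
  qed
  moreover have "A \<subseteq> mv_image T A"
  proof
    fix y assume yA: "y \<in> A"
    then have yX: "y \<in> topspace X" using AS by auto
    define K where "K n = fst ` (T \<inter> (S n \<times> {y}))" for n
    have Kcl: "closedin X (K n)" for n
    proof -
      have "compactin X (K n)" unfolding K_def
        by (rule image_compactin[OF T_cpt_Int[OF assms(2,3,4) Scl] continuous_map_fst])
          (simp add: closedin_Hausdorff_singleton assms(3) yX)
      then show ?thesis using compactin_imp_closedin assms(3) by metis
    qed
    have Kne: "K n \<noteq> {}" for n
    proof -
      have "y \<in> S (Suc n)" using yA A_def by auto
      then show ?thesis unfolding SS mv_image_def K_def by auto
    qed
    have Kdec: "decseq K" unfolding K_def decseq_def
      using Sdec unfolding decseq_def by blast
    obtain x where "x \<in> (\<Inter>n. K n)"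
      using compact_space_imp_nest[OF assms(2) Kcl Kne Kdec] by blast
    then have "\<forall>n. x \<in> S n \<and> (x,y) \<in> T" unfolding K_def by auto
    then show "y \<in> mv_image T A" unfolding A_def mv_image_def by force
  qed
  ultimately show ?thesis using AS Ane by blast
qed

end
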